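(* Let $A$ be a metric space, $\sigma:\mathbb{R}^N\times A\to\mathbb{R}^{N\times m}$, $b:\mathbb{R}^N\times A\to\mathbb{R}^N$ continuous, $a=\sigma\sigma^T$, such that for every $R>0$ there is $K_R$ with $\sup_{|x|\le R,\alpha}(|\sigma|+|b|)\le K_R$, $|\sigma(x,\alpha)-\sigma(y,\alpha)|+|b(x,\alpha)-b(y,\alpha)|\le K_R|x-y|$ for $|x|,|y|\le R$, and $\xi^Ta(x,\alpha)\xi\ge|\xi|^2/K_R$ for all $\xi$, $|x|\le R$, $\alpha$. Let $l:\mathbb{R}^N\times A\to\mathbb{R}$ be continuous, bounded, uniformly continuous in $x$ uniformly in $\alpha$, and let $F(x,p,X)$ be either $\inf_{\alpha}\{-\mathrm{tr}(a(x,\alpha)X)-b(x,\alpha)\cdot p-l(x,\alpha)\}$ or $\sup_\alpha\{-\mathrm{tr}(a(x,\alpha)X)-b(x,\alpha)\cdot p-l(x,\alpha)\}$. Assume that for every $M>0$ there is $R>0$ with $\sup_\alpha\{\mathrm{tr}\,a(x,\alpha)+b(x,\alpha)\cdot x\}\le-M$ for $|x|\ge R$. Let $c\in\mathbb{R}$ and $\chi$ be a viscosity solution of $F(x,D\chi,D^2\chi)=c$ in $\mathbb{R}^N$ with $\lim_{|x|\to\infty}\chi(x)/|x|^2=0$. Suppose moreover there exist $\rho>0$ and $R>0$ such that $$\sup_{\alpha\in A}\{\mathrm{tr}\,a(x,\alpha)+b(x,\alpha)\cdot x\}\le-\frac{2|c|+\|l\|_\infty}{\rho}|x|^{2+\rho}\quad\text{for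 }|x|\ge R.$$ Then for all $|x|\ge R$, $$\min_{|y|\le R}\chi(y)+\frac1{|x|^\rho}-\frac1{R^\rho}\le\chi(x)\le\max_{|y|\le R}\chi(y)-\frac1{|x|^\rho}+\frac1{R^\rho},$$ and in particular $\chi\in L^\infty(\mathbb{R}^N)$.
   Context: Solutions are viscosity solutions; $\|l\|_\infty=\sup_{\mathbb{R}^N\times A}|l|$. (Under these assumptions, such a pair $(c,\chi)$ exists, $c$ is unique, and $\chi$ is unique up to additive constants.) *)

theory Defs
  imports "HOL-Analysis.Analysis"
begin

text \<open>phi is C^2 on R^N with gradient Dphi and Hessian D2phi (continuous).\<close>
definition C2_with :: "(real^'n \<Rightarrow> real) \<Rightarrow> (real^'n \<Rightarrow> real^'n) \<Rightarrow> (real^'n \<Rightarrow> real^'n^'n) \<Rightarrow> bool" where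
  "C2_with phi Dphi D2phi \<longleftrightarrow>
     (\<forall>x. (phi has_derivative (\<lambda>h. Dphi x \<bullet> h)) (at x)) \<and>
     (\<forall>x. (Dphi has_derivative (\<lambda>h. D2phi x *v h)) (at x)) \<and>
     continuous_on UNIV D2phi"

text \<open>Viscosity sub/supersolutions of F(x,Du,D^2u) = c in R^N (continuous functions,
  C^2 test functions, local extrema).\<close>
definition visc_subsol :: "(real^'n \<Rightarrow> real^'n \<Rightarrow> real^'n^'n \<Rightarrow> real) \<Rightarrow> real \<Rightarrow> (real^'n \<Rightarrow> real) \<Rightarrow> bool" where
  "visc_subsol F c u \<longleftrightarrow> continuous_on UNIV u \<and>
     (\<forall>phi Dphi D2phi x0. C2_with phi Dphi D2phi \<and>
        (\<exists>e>0. \<forall>y. dist y x0 < e \<longrightarrow> u y - phi y \<le> u x0 - phi x0)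
        \<longrightarrow> F x0 (Dphi x0) (D2phi x0) \<le> c)"

definition visc_supersol :: "(real^'n \<Rightarrow> real^'n \<Rightarrow> real^'n^'n \<Rightarrow> real) \<Rightarrow> real \<Rightarrow> (real^'n \<Rightarrow> real) \<Rightarrow> bool" where
  "visc_supersol F c u \<longleftrightarrow> continuous_on UNIV u \<and>
     (\<forall>phi Dphi D2phi x0. C2_with phi Dphi D2phi \<and>
        (\<exists>e>0. \<forall>y. dist y x0 < e \<longrightarrow> u y - phi y \<ge> u x0 - phi x0)
        \<longrightarrow> F x0 (Dphi x0) (D2phi x0) \<ge> c)"

definition visc_sol :: "(real^'n \<Rightarrow> real^'n \<Rightarrow> real^'n^'n \<Rightarrow> real) \<Rightarrow> real \<Rightarrow> (real^'n \<Rightarrow> real) \<Rightarrow> bool" where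
  "visc_sol F c u \<longleftrightarrow> visc_subsol F c u \<and> visc_supersol F c u"

text \<open>Diffusion matrix a = sigma sigma^T.\<close>
definition diffm :: "(real^'n \<Rightarrow> 'a \<Rightarrow> real^'m^'n) \<Rightarrow> real^'n \<Rightarrow> 'a \<Rightarrow> real^'n^'n" where
  "diffm \<sigma> x \<alpha> = \<sigma> x \<alpha> ** transpose (\<sigma> x \<alpha>)"

definition bellman_inf :: "(real^'n \<Rightarrow> 'a \<Rightarrow> real^'m^'n) \<Rightarrow> (real^'n \<Rightarrow> 'a \<Rightarrow> real^'n) \<Rightarrow> (real^'n \<Rightarrow> 'a \<Rightarrow> real)
    \<Rightarrow> real^'n \<Rightarrow> real^'n \<Rightarrow> real^'n^'n \<Rightarrow> real" where
  "bellman_inf \<sigma> b l x p X = (INF \<alpha>. - trace (diffm \<sigma> x \<alpha> ** X) - b x \<alpha> \<bullet> p - l x \<alpha>)"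

definition bellman_sup :: "(real^'n \<Rightarrow> 'a \<Rightarrow> real^'m^'n) \<Rightarrow> (real^'n \<Rightarrow> 'a \<Rightarrow> real^'n) \<Rightarrow> (real^'n \<Rightarrow> 'a \<Rightarrow> real)
    \<Rightarrow> real^'n \<Rightarrow> real^'n \<Rightarrow> real^'n^'n \<Rightarrow> real" where
  "bellman_sup \<sigma> b l x p X = (SUP \<alpha>. - trace (diffm \<sigma> x \<alpha> ** X) - b x \<alpha> \<bullet> p - l x \<alpha>)"

text \<open>sup norm of l over R^N x A.\<close>
definition sup_norm :: "(real^'n \<Rightarrow> 'a \<Rightarrow> real) \<Rightarrow> real" where
  "sup_norm l = (SUP z. \<bar>l (fst z) (snd z)\<bar>)"

end

theory Submission
  imports Defs
begin



lemma trace_sst: fixes S :: "real^'m^'n"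
  shows "trace (S ** transpose S) = (norm S)^2"
  by (simp add: power2_norm_eq_inner inner_vec_def trace_def matrix_matrix_mult_def transpose_def)

lemma quad_sst: fixes S :: "real^'m^'n"
  shows "x \<bullet> ((S ** transpose S) *v x) = (norm (transpose S *v x))^2"
proof -
  have "x \<bullet> ((S ** transpose S) *v x) = x \<bullet> (S *v (transpose S *v x))"
    by (metis matrix_vector_mul_assoc)
  also have "\<dots> = (x v* S) \<bullet> (transpose S *v x)" by (simp add: dot_lmul_matrix)
  also have "x v* S = transpose S *v x"
    by (metis transpose_transpose vector_transpose_matrix)
  finally show ?thesis by (simp add: power2_norm_eq_inner)
qed

lemma norm_mv_le: fixes A :: "real^'m^'n"
  shows "norm (A *v x) \<le> real CARD('n) * real CARD('m) * norm A * norm x"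
proof -
  have bl: "bounded_linear ((*v) A)" by (simp add: matrix_vector_mult_linear_continuous_at linear_conv_bounded_linear)
  have "onorm ((*v) A) \<le> real CARD('n) * real CARD('m) * norm A"
    by (rule onorm_le_matrix_component) (rule order_trans[OF component_le_norm_cart Finite_Cartesian_Product.norm_nth_le])
  then show ?thesis using onorm[OF bl, of x]
    by (meson mult_right_mono norm_ge_zero order_trans)
qed

lemma trace_special: fixes A :: "real^'n^'n"
  shows "trace (A ** (\<chi> i j. c * (if i = j then 1 else 0) + d * x$i * x$j)) = c * trace A + d * (x \<bullet> (A *v x))"
proof -
  have "\<And>i. (\<Sum>k\<in>UNIV. A $ i $ k * (c * (if k = i then 1 else 0) + d * x$k * x$i))
     = c * A$i$i + (\<Sum>k\<in>UNIV. d * (x $ i * (x $ k * A $ i $ k)))"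
    proof -
    fix i
    have "\<And>k. A $ i $ k * (c * (if k = i then 1 else 0) + d * x$k * x$i) = (if k = i then c * A$i$i else 0) + d * (x $ i * (x $ k * A $ i $ k))"
      by (auto simp: algebra_simps)
    then show "?thesis i" by (simp add: sum.distrib)
  qed
  then show ?thesis
    by (simp add: trace_def matrix_matrix_mult_def inner_vec_def matrix_vector_mult_def
      sum.distrib sum_distrib_left mult_ac)
qed



lemma hess_vec:
  fixes x k :: "real^'n" and A B :: real
  shows "(2 * A) *\<^sub>R k + (2 * (B * (k \<bullet> x + x \<bullet> k))) *\<^sub>R x =
      (\<chi> i j. (2 * A) * (if i = j then 1 else 0) + (4 * B) * x$i * x$j) *v k"
proof (subst vec_eq_iff, rule allI)
  fix i
  have "\<And>j. ((2 * A) * (if i = j then 1 else 0) + (4 * B) * x$i * x$j) * k$j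
      = (if j = i then 2 * A * k$i else 0) + (4 * B * x$i) * (k$j * x$j)"
    by (auto simp: algebra_simps)
  then have "((\<chi> i j. (2 * A) * (if i = j then 1 else 0) + (4 * B) * x$i * x$j) *v k) $ i
     = 2 * A * k$i + (4 * B * x$i) * (k \<bullet> x)"
    by (simp add: matrix_vector_mult_def sum.distrib inner_vec_def sum_distrib_left[symmetric])
  then show "((2 * A) *\<^sub>R k + (2 * (B * (k \<bullet> x + x \<bullet> k))) *\<^sub>R x) $ i =
        ((\<chi> i j. (2 * A) * (if i = j then 1 else 0) + (4 * B) * x$i * x$j) *v k) $ i"
    by (simp add: inner_commute algebra_simps)
qed

lemma C2_radial:
  fixes h h1 h2 :: "real \<Rightarrow> real"
  assumes h: "\<And>r. r \<ge> 0 \<Longrightarrow> (h has_real_derivative h1 r) (at r)"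
  and h1: "\<And>r. r \<ge> 0 \<Longrightarrow> (h1 has_real_derivative h2 r) (at r)"
  and c2: "continuous_on {0..} h2"
  shows "C2_with (\<lambda>x::real^'n. h (x \<bullet> x)) (\<lambda>x. (2 * h1 (x \<bullet> x)) *\<^sub>R x)
     (\<lambda>x. \<chi> i j. (2 * h1 (x \<bullet> x)) * (if i = j then 1 else 0) + (4 * h2 (x \<bullet> x)) * x$i * x$j)"
  unfolding C2_with_def
proof (intro conjI allI)
  fix x :: "real^'n"
  have ii: "((\<lambda>x. x \<bullet> x) has_derivative (\<lambda>k. k \<bullet> x + x \<bullet> k)) (at x)"
    by (rule has_derivative_eq_rhs[OF has_derivative_inner[OF has_derivative_ident has_derivative_ident]])
       (simp add: fun_eq_iff add.commute)
  have hh: "(h has_derivative (\<lambda>d. h1 (x \<bullet> x) * d)) (at (x \<bullet> x))"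
    using h[of "x \<bullet> x"] by (simp add: has_field_derivative_def)
  show "((\<lambda>x. h (x \<bullet> x)) has_derivative (\<lambda>k. (2 * h1 (x \<bullet> x)) *\<^sub>R x \<bullet> k)) (at x)"
    using has_derivative_compose[OF ii hh]
    by (rule has_derivative_eq_rhs) (auto simp: inner_commute algebra_simps)
  have hh1: "(h1 has_derivative (\<lambda>d. h2 (x \<bullet> x) * d)) (at (x \<bullet> x))"
    using h1[of "x \<bullet> x"] by (simp add: has_field_derivative_def)
  have f: "((\<lambda>x. 2 * h1 (x \<bullet> x)) has_derivative (\<lambda>k. 2 * (h2 (x \<bullet> x) * (k \<bullet> x + x \<bullet> k)))) (at x)"
    using has_derivative_mult_right[OF has_derivative_compose[OF ii hh1], of 2] .
  show "((\<lambda>x. (2 * h1 (x \<bullet> x)) *\<^sub>R x) has_derivative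
     (\<lambda>k. (\<chi> i j. (2 * h1 (x \<bullet> x)) * (if i = j then 1 else 0) + (4 * h2 (x \<bullet> x)) * x$i * x$j) *v k)) (at x)"
    using has_derivative_scaleR[OF f has_derivative_ident]
  proof (rule has_derivative_eq_rhs)
    show "(\<lambda>k. (2 * h1 (x \<bullet> x)) *\<^sub>R k + (2 * (h2 (x \<bullet> x) * (k \<bullet> x + x \<bullet> k))) *\<^sub>R x) =
      (\<lambda>k. (\<chi> i j. (2 * h1 (x \<bullet> x)) * (if i = j then 1 else 0) + (4 * h2 (x \<bullet> x)) * x$i * x$j) *v k)"
      by (rule ext) (rule hess_vec)
  qed
next
  have ch1: "continuous_on {0..} h1"
    by (rule continuous_at_imp_continuous_on) (auto intro: DERIV_isCont h1)
  have ch1': "continuous_on UNIV (\<lambda>x::real^'n. h1 (x \<bullet> x))"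
    by (rule continuous_on_compose2[OF ch1]) (auto intro!: continuous_intros)
  have ch2': "continuous_on UNIV (\<lambda>x::real^'n. h2 (x \<bullet> x))"
    by (rule continuous_on_compose2[OF c2]) (auto intro!: continuous_intros)
  show "continuous_on UNIV (\<lambda>x::real^'n. \<chi> i j. (2 * h1 (x \<bullet> x)) * (if i = j then 1 else 0) + (4 * h2 (x \<bullet> x)) * x$i * x$j)"
    by (intro continuous_on_vec_lambda continuous_intros ch1' ch2')
qed

lemma norm_transpose_sq: fixes A :: "real^'m^'n"
  shows "norm (transpose A) = norm A"
proof -
  have "(norm (transpose A))^2 = (norm A)^2"
    unfolding power2_norm_eq_inner inner_vec_def transpose_def
    by (subst sum.swap) simp
  then show ?thesis by (simp add: power2_eq_iff_nonneg)
qed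


lemma pw: fixes s :: real assumes "s > 0" shows "1 / s powr \<rho> = (s^2) powr (-\<rho>/2)"
proof -
  have e: "s powr 2 = s^2" using powr_numeral[of s "num.Bit0 num.One"] assms by simp
  have "1 / s powr \<rho> = inverse (s powr \<rho>)" by (rule inverse_eq_divide[symmetric])
  also have "\<dots> = s powr (- \<rho>)" by (rule powr_minus[symmetric])
  also have "- \<rho> = 2 * (-\<rho>/2)" by simp
  also have "s powr (2 * (-\<rho>/2)) = (s powr 2) powr (-\<rho>/2)" by (rule powr_powr[symmetric])
  also have "\<dots> = (s^2) powr (-\<rho>/2)" by (simp only: e)
  finally show ?thesis .
qed

lemma powr_deriv_aux:
  fixes \<delta> p r :: real assumes "\<delta> > 0" "r \<ge> 0"
  shows "((\<lambda>r. (r+\<delta>) powr p) has_real_derivative p * (r+\<delta>) powr (p - 1)) (at r)"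
proof -
  have g: "((\<lambda>r. r+\<delta>) has_real_derivative 1) (at r)"
    by (auto intro!: derivative_eq_intros)
  have "((\<lambda>r. (r+\<delta>) powr p) has_real_derivative p * (r+\<delta>) powr (p - of_nat 1) * 1) (at r)"
    by (rule DERIV_fun_powr[OF g]) (use assms in simp)
  then show ?thesis by simp
qed

lemma h_deriv:
  fixes \<delta> :: real assumes "\<delta> > 0" "r \<ge> 0"
  shows "((\<lambda>r. K0 - (r+\<delta>) powr (-\<rho>/2) + \<epsilon>*r) has_real_derivative
          ((\<rho>/2) * (r+\<delta>) powr (-\<rho>/2-1) + \<epsilon>)) (at r)"
proof -
  have "((\<lambda>r. K0 - (r+\<delta>) powr (-\<rho>/2) + \<epsilon>*r) has_real_derivative
          0 - (-\<rho>/2) * (r+\<delta>) powr (-\<rho>/2-1) + \<epsilon> * 1) (at r)"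
    by (intro DERIV_add DERIV_diff DERIV_const DERIV_cmult DERIV_ident powr_deriv_aux assms)
  then show ?thesis by simp
qed

lemma h1_deriv:
  fixes \<delta> :: real assumes "\<delta> > 0" "r \<ge> 0"
  shows "((\<lambda>r. (\<rho>/2) * (r+\<delta>) powr (-\<rho>/2-1) + \<epsilon>) has_real_derivative
          (-(\<rho>/2)*(\<rho>/2+1) * (r+\<delta>) powr (-\<rho>/2-2))) (at r)"
proof -
  have "((\<lambda>r. (\<rho>/2) * (r+\<delta>) powr (-\<rho>/2-1) + \<epsilon>) has_real_derivative
          (\<rho>/2) * ((-\<rho>/2-1) * (r+\<delta>) powr (-\<rho>/2-1-1)) + 0) (at r)"
    by (intro DERIV_add DERIV_const DERIV_cmult powr_deriv_aux assms)
  moreover have "(\<rho>/2) * ((-\<rho>/2-1) * (r+\<delta>) powr (-\<rho>/2-1-1)) + 0 = -(\<rho>/2)*(\<rho>/2+1) * (r+\<delta>) powr (-\<rho>/2-2)"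
    by (simp add: algebra_simps)
  ultimately show ?thesis by simp
qed

lemma h2_cont:
  fixes \<delta> :: real assumes "\<delta> > 0"
  shows "continuous_on {0..} (\<lambda>r. -(\<rho>/2)*(\<rho>/2+1) * (r+\<delta>) powr (-\<rho>/2-2))"
  by (rule continuous_on_mult_left, rule continuous_on_powr') (use assms in \<open>auto intro!: continuous_intros\<close>)

lemma value_eq:
  "- trace (diffm \<sigma> x \<alpha> ** (\<chi> i j. (2*A) * (if i = j then 1 else 0) + (4*B) * x$i * x$j))
     - b x \<alpha> \<bullet> ((2*A) *\<^sub>R x) - l x \<alpha>
   = -(2*A) * (trace (diffm \<sigma> x \<alpha>) + b x \<alpha> \<bullet> x) - (4*B) * (x \<bullet> (diffm \<sigma> x \<alpha> *v x)) - l x \<alpha>"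
  by (simp only: trace_special inner_scaleR_right) (simp add: algebra_simps)


lemma upper:
  fixes \<sigma> :: "real^'n \<Rightarrow> 'a \<Rightarrow> real^'m^'n"
    and b :: "real^'n \<Rightarrow> 'a \<Rightarrow> real^'n"
    and l :: "real^'n \<Rightarrow> 'a \<Rightarrow> real"
    and F :: "real^'n \<Rightarrow> real^'n \<Rightarrow> real^'n^'n \<Rightarrow> real"
    and u :: "real^'n \<Rightarrow> real"
    and c \<rho> R L :: real
  assumes loc: "\<forall>R'>0. \<exists>K>0.
        (\<forall>x \<alpha>. norm x \<le> R' \<longrightarrow> norm (\<sigma> x \<alpha>) + norm (b x \<alpha>) \<le> K) \<and>
        (\<forall>x y \<alpha>. norm x \<le> R' \<longrightarrow> norm y \<le> R' \<longrightarrow>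
            norm (\<sigma> x \<alpha> - \<sigma> y \<alpha>) + norm (b x \<alpha> - b y \<alpha>) \<le> K * norm (x - y)) \<and>
        (\<forall>\<xi> x \<alpha>. norm x \<le> R' \<longrightarrow> \<xi> \<bullet> (diffm \<sigma> x \<alpha> *v \<xi>) \<ge> (norm \<xi>)\<^sup>2 / K)"
    and lb: "\<And>x \<alpha>. \<bar>l x \<alpha>\<bar> \<le> L"
    and F_def: "F = bellman_inf \<sigma> b l \<or> F = bellman_sup \<sigma> b l"
    and sub: "visc_subsol F c u"
    and growth: "((\<lambda>x. u x / (norm x)\<^sup>2) \<longlongrightarrow> 0) at_infinity"
    and \<rho>_pos: "\<rho> > 0" and R_pos: "R > 0"
    and strong: "\<forall>x. norm x \<ge> R \<longrightarrow>
        (SUP \<alpha>. trace (diffm \<sigma> x \<alpha>) + b x \<alpha> \<bullet> x)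
          \<le> - ((2 * \<bar>c\<bar> + L) / \<rho>) * norm x powr (2 + \<rho>)"
    and x1: "norm x1 \<ge> R"
  shows "u x1 \<le> (SUP y\<in>cball 0 R. u y) - 1 / norm x1 powr \<rho> + 1 / R powr \<rho>"
proof (rule ccontr)
  assume neg: "\<not> ?thesis"
  define D where "D = 2 * \<bar>c\<bar> + L"
  define C where "C = D / \<rho>"
  have L0: "L \<ge> 0" using lb[of 0 undefined] by linarith
  have D0: "D \<ge> 0" using L0 by (simp add: D_def)
  have C0: "C \<ge> 0" using D0 \<rho>_pos by (simp add: C_def)
  have rhoC: "\<rho> * C = D" using \<rho>_pos by (simp add: C_def)
  have ucont: "continuous_on UNIV u" using sub by (simp add: visc_subsol_def)
  have bnd: "\<exists>K>0. \<forall>\<alpha>. norm (\<sigma> x \<alpha>) \<le> K \<and> norm (b x \<alpha>) \<le> K" if xR: "norm x \<ge> R" for x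
  proof -
    have "norm x > 0" using R_pos xR by linarith
    then obtain K where K: "K > 0" "\<forall>x' \<alpha>. norm x' \<le> norm x \<longrightarrow> norm (\<sigma> x' \<alpha>) + norm (b x' \<alpha>) \<le> K"
      using loc by blast
    have "norm (\<sigma> x \<alpha>) \<le> K \<and> norm (b x \<alpha>) \<le> K" for \<alpha>
    proof -
      have "norm (\<sigma> x \<alpha>) + norm (b x \<alpha>) \<le> K" using K(2) by blast
      then show ?thesis using norm_ge_zero[of "\<sigma> x \<alpha>"] norm_ge_zero[of "b x \<alpha>"] by linarith
    qed
    then show ?thesis using K(1) by blast
  qed
  have str: "trace (diffm \<sigma> x \<alpha>) + b x \<alpha> \<bullet> x \<le> - C * norm x powr (2 + \<rho>)" if xR: "norm x \<ge> R" for x \<alpha>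
  proof -
    obtain K where K: "K > 0" "\<And>\<alpha>. norm (\<sigma> x \<alpha>) \<le> K \<and> norm (b x \<alpha>) \<le> K" using bnd[OF xR] by blast
    have "bdd_above (range (\<lambda>\<alpha>. trace (diffm \<sigma> x \<alpha>) + b x \<alpha> \<bullet> x))"
    proof (rule bdd_aboveI2)
      fix \<alpha>
      have "trace (diffm \<sigma> x \<alpha>) = (norm (\<sigma> x \<alpha>))^2" by (simp add: diffm_def trace_sst)
      also have "\<dots> \<le> K^2" using K(2)[of \<alpha>] by (simp add: power_mono)
      finally have t: "trace (diffm \<sigma> x \<alpha>) \<le> K^2" .
      have "b x \<alpha> \<bullet> x \<le> norm (b x \<alpha>) * norm x" by (rule norm_cauchy_schwarz)
      also have "\<dots> \<le> K * norm x" using K(2)[of \<alpha>] by (simp add: mult_right_mono)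
      finally show "trace (diffm \<sigma> x \<alpha>) + b x \<alpha> \<bullet> x \<le> K^2 + K * norm x" using t by linarith
    qed
    then have "trace (diffm \<sigma> x \<alpha>) + b x \<alpha> \<bullet> x \<le> (SUP \<alpha>. trace (diffm \<sigma> x \<alpha>) + b x \<alpha> \<bullet> x)"
      by (rule cSUP_upper[OF UNIV_I])
    also have "\<dots> \<le> - C * norm x powr (2 + \<rho>)" using strong xR by (simp add: C_def D_def)
    finally show ?thesis .
  qed
  define M0 where "M0 = (SUP y\<in>cball 0 R. u y)"
  have bddc: "bdd_above (u ` cball 0 R)"
    by (rule bounded_imp_bdd_above, rule compact_imp_bounded, rule compact_continuous_image)
       (auto intro: continuous_on_subset[OF ucont])
  have uM: "u y \<le> M0" if "norm y \<le> R" for y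
    unfolding M0_def by (rule cSUP_upper[OF _ bddc]) (use that in simp)
  define s1 where "s1 = norm x1"
  have s1pos: "s1 > 0" using x1 R_pos s1_def by linarith
  have tgt: "M0 - 1 / norm x1 powr \<rho> + 1 / R powr \<rho> = M0 - (s1^2) powr (-\<rho>/2) + (R^2) powr (-\<rho>/2)"
    using pw[OF s1pos, of \<rho>] pw[OF R_pos, of \<rho>] s1_def by simp
  define tg where "tg = M0 - (s1^2) powr (-\<rho>/2) + (R^2) powr (-\<rho>/2)"
  define \<eta> where "\<eta> = (u x1 - tg) / 3"
  have \<eta>pos: "\<eta> > 0" using neg tgt by (simp add: \<eta>_def M0_def tg_def)
  have u1: "u x1 = tg + 3 * \<eta>" by (simp add: \<eta>_def field_simps)
  define \<epsilon> where "\<epsilon> = \<eta> / (s1^2 + 1)"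
  have s11: "s1^2 + 1 > 0" by (simp add: add_nonneg_pos)
  have \<epsilon>pos: "\<epsilon> > 0" using \<eta>pos s11 by (simp add: \<epsilon>_def)
  have \<epsilon>s1: "\<epsilon> * s1^2 \<le> \<eta>"
  proof -
    have "\<epsilon> * s1^2 = \<eta> * (s1^2 / (s1^2+1))" by (simp add: \<epsilon>_def)
    also have "s1^2 / (s1^2+1) \<le> 1" using s11 by simp
    then have "\<eta> * (s1^2 / (s1^2+1)) \<le> \<eta> * 1" using \<eta>pos by (intro mult_left_mono) auto
    finally show ?thesis by simp
  qed
  have "\<forall>\<^sub>F x in at_infinity. u x / (norm x)\<^sup>2 < \<epsilon>/2"
    by (rule order_tendstoD(2)[OF growth]) (use \<epsilon>pos in simp)
  then obtain S0 where S0: "\<And>x. norm x \<ge> S0 \<Longrightarrow> u x / (norm x)\<^sup>2 < \<epsilon>/2"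
    unfolding eventually_at_infinity by blast
  have ugr: "u x \<le> \<epsilon>/2 * (norm x)^2" if h: "norm x \<ge> max S0 1" for x
  proof -
    have "norm x > 0" using h by linarith
    then have "(norm x)^2 > 0" by simp
    with S0[of x] h show ?thesis by (simp add: pos_divide_less_eq less_imp_le)
  qed
  define Q where "Q = \<bar>M0\<bar> + (R^2) powr (-\<rho>/2) + 1"
  define S where "S = max (max (max S0 1) s1) (2 * Q / \<epsilon>)"
  have S1: "S \<ge> 1" "S \<ge> s1" "S \<ge> max S0 1" "S \<ge> 2*Q/\<epsilon>" by (auto simp: S_def)
  have SR: "S \<ge> R" using S1 x1 s1_def by linarith
  have Spos: "S > 0" using S1 by linarith
  have SQ: "\<epsilon>/2 * S^2 \<ge> Q"
  proof -
    have "S^2 \<ge> S" using S1(1) by (simp add: power2_eq_square)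
    then have a: "\<epsilon>/2 * S^2 \<ge> \<epsilon>/2 * S" using \<epsilon>pos by simp
    have b: "\<epsilon>/2 * S \<ge> \<epsilon>/2 * (2*Q/\<epsilon>)" using S1(4) \<epsilon>pos by (intro mult_left_mono) auto
    have "\<epsilon>/2 * (2*Q/\<epsilon>) = Q" using \<epsilon>pos by simp
    with a b show ?thesis by linarith
  qed
  from loc[rule_format, OF Spos] obtain K where K: "K > 0"
     "\<forall>x \<alpha>. norm x \<le> S \<longrightarrow> norm (\<sigma> x \<alpha>) + norm (b x \<alpha>) \<le> K"
     "\<forall>\<xi> x \<alpha>. norm x \<le> S \<longrightarrow> \<xi> \<bullet> (diffm \<sigma> x \<alpha> *v \<xi>) \<ge> (norm \<xi>)\<^sup>2 / K"
    by blast
  define P0 where "P0 = \<rho>*(\<rho>+2) * (S^2+1) powr (-\<rho>/2-2) * R^2 / K"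
  have S21: "S^2 + 1 > 0" by (simp add: add_nonneg_pos)
  have pp: "(S^2+1) powr (-\<rho>/2-2) > 0" using S21 by simp
  have P0pos: "P0 > 0" unfolding P0_def using \<rho>_pos R_pos K(1) pp by (intro divide_pos_pos mult_pos_pos) auto
  have ev0: "\<forall>\<^sub>F \<delta> in at_right (0::real). 0 < \<delta>" by (rule eventually_at_right_less)
  have ev1: "\<forall>\<^sub>F \<delta> in at_right (0::real). \<delta> < 1"
    by (rule order_tendstoD(2)[OF tendsto_ident_at]) simp
  have "((\<lambda>\<delta>. (s1^2+\<delta>) powr (-\<rho>/2)) \<longlongrightarrow> (s1^2+0) powr (-\<rho>/2)) (at_right 0)"
    by (intro tendsto_intros) (use s1pos in auto)
  then have ev3: "\<forall>\<^sub>F \<delta> in at_right (0::real). (s1^2) powr (-\<rho>/2) - \<eta> < (s1^2+\<delta>) powr (-\<rho>/2)"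
    by (rule order_tendstoD(1)) (use \<eta>pos in simp)
  have "((\<lambda>\<delta>. D * (R^2/(R^2+\<delta>)) powr ((\<rho>+2)/2)) \<longlongrightarrow> D * (R^2/(R^2+0)) powr ((\<rho>+2)/2)) (at_right 0)"
    by (intro tendsto_intros) (use R_pos in auto)
  then have ev4: "\<forall>\<^sub>F \<delta> in at_right (0::real). D - P0/2 < D * (R^2/(R^2+\<delta>)) powr ((\<rho>+2)/2)"
    by (rule order_tendstoD(1)) (use P0pos R_pos in simp)
  have "\<forall>\<^sub>F \<delta> in at_right (0::real). 0 < \<delta> \<and> \<delta> < 1 \<and> (s1^2) powr (-\<rho>/2) - \<eta> < (s1^2+\<delta>) powr (-\<rho>/2)
        \<and> D - P0/2 < D * (R^2/(R^2+\<delta>)) powr ((\<rho>+2)/2)"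
    using ev0 ev1 ev3 ev4 by eventually_elim auto
  then obtain \<delta> where \<delta>: "0 < \<delta>" "\<delta> < 1" "(s1^2) powr (-\<rho>/2) - \<eta> < (s1^2+\<delta>) powr (-\<rho>/2)"
        "D - P0/2 < D * (R^2/(R^2+\<delta>)) powr ((\<rho>+2)/2)"
    using eventually_happens'[of "at_right (0::real)"] by force
  define K0 where "K0 = M0 + (R^2+\<delta>) powr (-\<rho>/2)"
  define h where "h = (\<lambda>r. K0 - (r+\<delta>) powr (-\<rho>/2) + \<epsilon>*r)"
  define h1 where "h1 = (\<lambda>r. (\<rho>/2) * (r+\<delta>) powr (-\<rho>/2-1) + \<epsilon>)"
  define h2 where "h2 = (\<lambda>r::real. -(\<rho>/2)*(\<rho>/2+1) * (r+\<delta>) powr (-\<rho>/2-2))"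
  define w where "w = (\<lambda>x::real^'n. h (x \<bullet> x))"
  define Dw where "Dw = (\<lambda>x::real^'n. (2 * h1 (x \<bullet> x)) *\<^sub>R x)"
  define D2w where "D2w = (\<lambda>x::real^'n. \<chi> i j. (2 * h1 (x \<bullet> x)) * (if i = j then 1 else 0) + (4 * h2 (x \<bullet> x)) * x$i * x$j)"
  have hd: "(h has_real_derivative h1 r) (at r)" if "r \<ge> 0" for r
    unfolding h_def h1_def by (rule h_deriv) (use \<delta> that in auto)
  have h1d: "(h1 has_real_derivative h2 r) (at r)" if "r \<ge> 0" for r
    unfolding h2_def h1_def by (rule h1_deriv) (use \<delta> that in auto)
  have h2c: "continuous_on {0..} h2"
    unfolding h2_def by (rule h2_cont) (use \<delta> in auto)
  have C2: "C2_with w Dw D2w"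
    unfolding w_def Dw_def D2w_def by (rule C2_radial[OF hd h1d h2c])
  have wcont: "continuous_on UNIV w"
  proof (rule continuous_at_imp_continuous_on, rule ballI)
    fix x :: "real^'n"
    have "(w has_derivative (\<lambda>h. Dw x \<bullet> h)) (at x)" using C2 by (simp add: C2_with_def)
    then show "isCont w x" by (rule has_derivative_continuous)
  qed
  have wval: "w x = M0 + (R^2+\<delta>) powr (-\<rho>/2) - ((norm x)^2+\<delta>) powr (-\<rho>/2) + \<epsilon> * (norm x)^2" for x
    by (simp add: w_def h_def K0_def power2_norm_eq_inner)
  define f where "f = (\<lambda>x. u x - w x)"
  have pmono: "(b2) powr (-\<rho>/2) \<le> (a2) powr (-\<rho>/2)" if "0 < a2" "a2 \<le> b2" for a2 b2 :: real
    by (rule powr_mono2') (use that \<rho>_pos in auto)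
  have F1: "f x \<le> - \<epsilon> * R^2" if "norm x = R" for x
    using uM[of x] that by (simp add: f_def wval)
  have F2: "f x1 > \<eta>"
  proof -
    have a: "(R^2+\<delta>) powr (-\<rho>/2) \<le> (R^2) powr (-\<rho>/2)" by (rule pmono) (use R_pos \<delta> in auto)
    have "w x1 = M0 + (R^2+\<delta>) powr (-\<rho>/2) - (s1^2+\<delta>) powr (-\<rho>/2) + \<epsilon> * s1^2"
      by (simp add: wval s1_def)
    then have "w x1 < tg + 2 * \<eta>" using a \<delta>(3) \<epsilon>s1 by (simp add: tg_def)
    then show ?thesis using u1 by (simp add: f_def)
  qed
  have F3: "f x < 0" if xS: "norm x \<ge> S" for x
  proof -
    have ux: "u x \<le> \<epsilon>/2 * (norm x)^2" using ugr S1(3) xS by auto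
    have Rx: "R^2 \<le> (norm x)^2" using xS SR R_pos by (intro power_mono) auto
    have R2: "0 < R^2" using R_pos by simp
    have Rx': "R^2 \<le> (norm x)^2 + \<delta>" using Rx \<delta>(1) by linarith
    have a: "((norm x)^2+\<delta>) powr (-\<rho>/2) \<le> (R^2) powr (-\<rho>/2)" using pmono[OF R2 Rx'] .
    have b: "(R^2+\<delta>) powr (-\<rho>/2) \<ge> 0" by simp
    have Sx: "S^2 \<le> (norm x)^2" using xS Spos by (intro power_mono) auto
    have "\<epsilon>/2 * S^2 \<le> \<epsilon>/2 * (norm x)^2" using Sx \<epsilon>pos by (intro mult_left_mono) auto
    then have c: "\<epsilon>/2 * (norm x)^2 \<ge> Q" using SQ by linarith
    have m: "- M0 \<le> \<bar>M0\<bar>" by simp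
    show ?thesis unfolding f_def wval using ux a b c m unfolding Q_def by linarith
  qed
  define Ann where "Ann = cball (0::real^'n) S - ball 0 R"
  have AnnI: "x \<in> Ann \<longleftrightarrow> R \<le> norm x \<and> norm x \<le> S" for x by (auto simp: Ann_def)
  have cA: "compact Ann" unfolding Ann_def by (intro compact_diff compact_cball open_ball)
  have x1A: "x1 \<in> Ann" using AnnI x1 S1(2) s1_def by auto
  have fc: "continuous_on Ann f" unfolding f_def
    by (intro continuous_on_diff continuous_on_subset[OF ucont] continuous_on_subset[OF wcont]) auto
  obtain x0 where x0A: "x0 \<in> Ann" and x0max: "\<And>y. y \<in> Ann \<Longrightarrow> f y \<le> f x0"
    using continuous_attains_sup[OF cA _ fc] x1A by blast
  have fx0: "f x0 > \<eta>" using x0max[OF x1A] F2 by linarith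
  have x0R: "norm x0 > R"
  proof (rule ccontr)
    assume "\<not> norm x0 > R"
    then have "norm x0 = R" using x0A AnnI by force
    then have "f x0 \<le> - \<epsilon> * R^2" by (rule F1)
    moreover have "\<epsilon> * R^2 \<ge> 0" using \<epsilon>pos by simp
    ultimately show False using fx0 \<eta>pos by linarith
  qed
  have x0S: "norm x0 \<le> S" using x0A AnnI by auto
  have lmax: "\<forall>y. dist y x0 < norm x0 - R \<longrightarrow> u y - w y \<le> u x0 - w x0"
  proof (intro allI impI)
    fix y assume d: "dist y x0 < norm x0 - R"
    have "norm x0 - norm y \<le> norm (x0 - y)" by (rule norm_triangle_ineq2)
    moreover have "dist y x0 = norm (x0 - y)" by (simp add: dist_norm norm_minus_commute)
    ultimately have yR: "norm y > R" using d by linarith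
    show "u y - w y \<le> u x0 - w x0"
    proof (cases "norm y \<le> S")
      case True
      then have "y \<in> Ann" using AnnI yR by auto
      then show ?thesis using x0max unfolding f_def by blast
    next
      case False
      then have "f y < 0" using F3 by auto
      then show ?thesis using fx0 \<eta>pos unfolding f_def by linarith
    qed
  qed
  have Fle: "F x0 (Dw x0) (D2w x0) \<le> c"
  proof -
    have "C2_with w Dw D2w \<and> (\<exists>e>0. \<forall>y. dist y x0 < e \<longrightarrow> u y - w y \<le> u x0 - w x0)"
      using C2 lmax x0R by (intro conjI exI[of _ "norm x0 - R"]) auto
    then show ?thesis using sub unfolding visc_subsol_def by blast
  qed
  define s where "s = norm x0"
  have sR: "R < s" and sS: "s \<le> S" using x0R x0S by (auto simp: s_def)
  have spos: "s > 0" using sR R_pos by linarith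
  define T where "T = s^2 + \<delta>"
  have Tpos: "T > 0" using \<delta> by (simp add: T_def add_nonneg_pos)
  have x0x0: "x0 \<bullet> x0 = s^2" by (simp add: s_def power2_norm_eq_inner)
  define A1 where "A1 = 2 * h1 (x0 \<bullet> x0)"
  define B1 where "B1 = - (4 * h2 (x0 \<bullet> x0))"
  have A1eq: "A1 = \<rho> * T powr (-\<rho>/2-1) + 2*\<epsilon>" by (simp add: A1_def h1_def x0x0 T_def)
  have B1eq: "B1 = \<rho>*(\<rho>+2) * T powr (-\<rho>/2-2)" by (simp add: B1_def h2_def x0x0 T_def algebra_simps)
  have A1pos: "A1 \<ge> \<rho> * T powr (-\<rho>/2-1)" using A1eq \<epsilon>pos by simp
  have A1nn: "A1 \<ge> 0" using A1eq \<epsilon>pos \<rho>_pos by simp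
  have val: "- trace (diffm \<sigma> x0 \<alpha> ** D2w x0) - b x0 \<alpha> \<bullet> Dw x0 - l x0 \<alpha> =
      - A1 * (trace (diffm \<sigma> x0 \<alpha>) + b x0 \<alpha> \<bullet> x0) + B1 * (x0 \<bullet> (diffm \<sigma> x0 \<alpha> *v x0)) - l x0 \<alpha>" for \<alpha>
    unfolding D2w_def Dw_def value_eq A1_def B1_def by simp
  define a where "a = (\<rho>+2)/2"
  have ratio: "T powr (-\<rho>/2-1) * s powr (2+\<rho>) \<ge> (R^2/(R^2+\<delta>)) powr a"
  proof -
    have e0: "s powr 2 = s^2" using powr_numeral[of s "num.Bit0 num.One"] spos by simp
    have e1: "s powr (2+\<rho>) = (s^2) powr a"
    proof -
      have "(s^2) powr a = (s powr 2) powr a" by (simp only: e0)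
      also have "\<dots> = s powr (2 * a)" by (rule powr_powr)
      also have "2 * a = 2 + \<rho>" by (simp add: a_def)
      finally show ?thesis by simp
    qed
    have e2: "T powr (-\<rho>/2-1) = inverse (T powr a)"
    proof -
      have "-\<rho>/2-1 = - a" by (simp add: a_def field_simps)
      then show ?thesis by (simp only: powr_minus)
    qed
    have e3: "(s^2/T) powr a = (s^2) powr a / T powr a" by (rule powr_divide)
    have eq: "T powr (-\<rho>/2-1) * s powr (2+\<rho>) = (s^2/T) powr a"
      by (simp only: e1 e2 e3) (simp add: divide_inverse mult.commute)
    have Rs: "R^2 \<le> s^2" using sR R_pos by (intro power_mono) auto
    have "R^2/(R^2+\<delta>) \<le> s^2/T"
    proof -
      have "R^2 * \<delta> \<le> s^2 * \<delta>" using Rs \<delta>(1) by (intro mult_right_mono) auto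
      then have "R^2 * (s^2 + \<delta>) \<le> s^2 * (R^2 + \<delta>)" by (simp add: algebra_simps)
      moreover have "R^2 + \<delta> > 0" using \<delta>(1) by (simp add: add_nonneg_pos)
      ultimately show ?thesis using Tpos unfolding T_def by (simp add: divide_simps mult.commute)
    qed
    then have "(R^2/(R^2+\<delta>)) powr a \<le> (s^2/T) powr a"
      by (intro powr_mono2) (use \<rho>_pos \<delta>(1) in \<open>auto simp: a_def\<close>)
    then show ?thesis using eq by simp
  qed
  have TS: "T \<le> S^2 + 1"
  proof -
    have "s^2 \<le> S^2" using sS spos by (intro power_mono) auto
    then show ?thesis using \<delta>(2) by (simp add: T_def)
  qed
  have B1ge: "B1 \<ge> \<rho>*(\<rho>+2) * (S^2+1) powr (-\<rho>/2-2)"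
  proof -
    have "(S^2+1) powr (-\<rho>/2-2) \<le> T powr (-\<rho>/2-2)" by (rule powr_mono2') (use Tpos TS \<rho>_pos in auto)
    then show ?thesis unfolding B1eq using \<rho>_pos by (intro mult_left_mono) auto
  qed
  define V where "V = 2 * \<bar>c\<bar> + P0/2"
  have Vc: "V > c" using P0pos by (simp add: V_def) 
  have vge: "V \<le> - A1 * (trace (diffm \<sigma> x0 \<alpha>) + b x0 \<alpha> \<bullet> x0) + B1 * (x0 \<bullet> (diffm \<sigma> x0 \<alpha> *v x0)) - l x0 \<alpha>" for \<alpha>
  proof -
    define tb where "tb = trace (diffm \<sigma> x0 \<alpha>) + b x0 \<alpha> \<bullet> x0"
    define q where "q = x0 \<bullet> (diffm \<sigma> x0 \<alpha> *v x0)"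
    define sp where "sp = s powr (2+\<rho>)"
    have tb: "tb \<le> - C * sp" unfolding tb_def sp_def s_def by (rule str) (use x0R in auto)
    have spnn: "sp \<ge> 0" by (simp add: sp_def)
    have t1: "- A1 * tb \<ge> A1 * (C * sp)"
    proof -
      have "A1 * (C * sp) \<le> A1 * (- tb)" using tb A1nn by (intro mult_left_mono) auto
      then show ?thesis by simp
    qed
    have t2: "A1 * (C * sp) \<ge> (\<rho> * T powr (-\<rho>/2-1)) * (C * sp)"
      using A1pos C0 spnn by (intro mult_right_mono) auto
    have t3: "(\<rho> * T powr (-\<rho>/2-1)) * (C * sp) = D * (T powr (-\<rho>/2-1) * sp)"
      using rhoC by (simp add: algebra_simps)
    have t4: "D * (T powr (-\<rho>/2-1) * sp) \<ge> D * (R^2/(R^2+\<delta>)) powr a"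
      using ratio D0 unfolding sp_def by (intro mult_left_mono) auto
    have t5: "D * (R^2/(R^2+\<delta>)) powr a > D - P0/2" using \<delta>(4) by (simp add: a_def)
    have q: "q \<ge> R^2 / K"
    proof -
      have "q \<ge> (norm x0)^2 / K" unfolding q_def using K(3) x0S by blast
      moreover have "R^2 / K \<le> (norm x0)^2 / K"
        using x0R R_pos K(1) by (intro divide_right_mono power_mono) auto
      ultimately show ?thesis by linarith
    qed
    have t6: "B1 * q \<ge> P0"
    proof -
      have "B1 * q \<ge> (\<rho>*(\<rho>+2) * (S^2+1) powr (-\<rho>/2-2)) * (R^2 / K)"
      proof (rule mult_mono)
        have "0 \<le> \<rho>*(\<rho>+2) * (S^2+1) powr (-\<rho>/2-2)" using \<rho>_pos pp by simp
        then show "0 \<le> B1" using B1ge by linarith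
      qed (use B1ge q \<rho>_pos K(1) in auto)
      then show ?thesis by (simp add: P0_def)
    qed
    have t7: "- l x0 \<alpha> \<ge> - L" using lb[of x0 \<alpha>] by linarith
    have "V \<le> - A1 * tb + B1 * q - l x0 \<alpha>"
      using t1 t2 t3 t4 t5 t6 t7 unfolding V_def D_def by linarith
    then show ?thesis by (simp add: tb_def q_def)
  qed
  have Kx: "norm (\<sigma> x0 \<alpha>) \<le> K \<and> norm (b x0 \<alpha>) \<le> K" for \<alpha>
  proof -
    have "norm (\<sigma> x0 \<alpha>) + norm (b x0 \<alpha>) \<le> K" using K(2) x0S by blast
    then show ?thesis using norm_ge_zero[of "\<sigma> x0 \<alpha>"] norm_ge_zero[of "b x0 \<alpha>"] by linarith
  qed
  have Fge: "F x0 (Dw x0) (D2w x0) \<ge> V"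
    using F_def
  proof
    assume Fi: "F = bellman_inf \<sigma> b l"
    show ?thesis unfolding Fi bellman_inf_def val by (rule cINF_greatest, simp, rule vge)
  next
    assume Fs: "F = bellman_sup \<sigma> b l"
    have bdd: "bdd_above (range (\<lambda>\<alpha>. - A1 * (trace (diffm \<sigma> x0 \<alpha>) + b x0 \<alpha> \<bullet> x0) + B1 * (x0 \<bullet> (diffm \<sigma> x0 \<alpha> *v x0)) - l x0 \<alpha>))"
    proof (rule bdd_aboveI2)
      fix \<alpha>
      define tb where "tb = trace (diffm \<sigma> x0 \<alpha>) + b x0 \<alpha> \<bullet> x0"
      define q where "q = x0 \<bullet> (diffm \<sigma> x0 \<alpha> *v x0)"
      have B1nn: "B1 \<ge> 0" using B1eq \<rho>_pos Tpos by simp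
      have tr: "trace (diffm \<sigma> x0 \<alpha>) = (norm (\<sigma> x0 \<alpha>))^2" by (simp add: diffm_def trace_sst)
      have tr2: "(norm (\<sigma> x0 \<alpha>))^2 \<le> K^2" using Kx[of \<alpha>] by (intro power_mono) auto
      have bx: "\<bar>b x0 \<alpha> \<bullet> x0\<bar> \<le> norm (b x0 \<alpha>) * norm x0" by (rule Cauchy_Schwarz_ineq2)
      have bx2: "norm (b x0 \<alpha>) * norm x0 \<le> K * s" unfolding s_def using Kx[of \<alpha>] by (intro mult_right_mono) auto
      have tba: "\<bar>tb\<bar> \<le> K^2 + K * s" 
      proof -
        have bx': "b x0 \<alpha> \<bullet> x0 \<le> K * s" "- (b x0 \<alpha> \<bullet> x0) \<le> K * s" using bx bx2 by (auto simp: abs_le_iff)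
        have n0: "0 \<le> (norm (\<sigma> x0 \<alpha>))^2" by simp
        show ?thesis unfolding tb_def by (rule abs_leI) (use tr tr2 bx' n0 in linarith)+
      qed
      have t1: "- A1 * tb \<le> A1 * (K^2 + K * s)"
      proof -
        have "- A1 * tb \<le> A1 * \<bar>tb\<bar>" 
        proof -
          have "A1 * (- tb) \<le> A1 * \<bar>tb\<bar>" using A1nn by (intro mult_left_mono) auto
          then show ?thesis by simp
        qed
        also have "\<dots> \<le> A1 * (K^2 + K * s)" using tba A1nn by (intro mult_left_mono) auto
        finally show ?thesis .
      qed
      have qeq: "q = (norm (transpose (\<sigma> x0 \<alpha>) *v x0))^2" by (simp add: q_def diffm_def quad_sst)
      have nq: "norm (transpose (\<sigma> x0 \<alpha>) *v x0) \<le> real CARD('m) * real CARD('n) * K * s"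
      proof -
        have "norm (transpose (\<sigma> x0 \<alpha>) *v x0) \<le> real CARD('m) * real CARD('n) * norm (transpose (\<sigma> x0 \<alpha>)) * norm x0"
          by (rule norm_mv_le)
        also have "\<dots> \<le> real CARD('m) * real CARD('n) * K * s"
          unfolding norm_transpose_sq s_def using Kx[of \<alpha>] by (intro mult_right_mono mult_left_mono) auto
        finally show ?thesis .
      qed
      have t2: "B1 * q \<le> B1 * (real CARD('m) * real CARD('n) * K * s)^2"
        unfolding qeq using nq B1nn by (intro mult_left_mono power_mono) auto
      have t3: "- l x0 \<alpha> \<le> L" using lb[of x0 \<alpha>] by linarith
      show "- A1 * (trace (diffm \<sigma> x0 \<alpha>) + b x0 \<alpha> \<bullet> x0) + B1 * (x0 \<bullet> (diffm \<sigma> x0 \<alpha> *v x0)) - l x0 \<alpha>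
         \<le> A1 * (K^2 + K * s) + B1 * (real CARD('m) * real CARD('n) * K * s)^2 + L"
        using t1 t2 t3 unfolding tb_def q_def by linarith
    qed
    show ?thesis unfolding Fs bellman_sup_def val by (rule cSUP_upper2[OF bdd UNIV_I vge])
  qed
  show False using Fge Fle Vc by linarith
qed



lemma trace_mul_neg: fixes A X :: "real^'n^'n" shows "trace (A ** - X) = - trace (A ** X)"
  by (simp add: trace_def matrix_matrix_mult_def sum_negf)

lemma mv_neg: fixes M :: "real^'n^'m" shows "(- M) *v h = - (M *v h)"
  by (simp add: vec_eq_iff matrix_vector_mult_def sum_negf)

lemma C2_neg: assumes "C2_with phi Dphi D2phi"
  shows "C2_with (\<lambda>x. - phi x) (\<lambda>x. - Dphi x) (\<lambda>x. - D2phi x)"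
  using assms unfolding C2_with_def
proof (intro conjI allI)
  fix x
  assume a: "(\<forall>x. (phi has_derivative (\<lambda>h. Dphi x \<bullet> h)) (at x)) \<and>
    (\<forall>x. (Dphi has_derivative (*v) (D2phi x)) (at x)) \<and> continuous_on UNIV D2phi"
  show "((\<lambda>x. - phi x) has_derivative (\<lambda>h. - Dphi x \<bullet> h)) (at x)"
    using has_derivative_minus[OF a[THEN conjunct1, rule_format, of x]] by simp
  show "((\<lambda>x. - Dphi x) has_derivative (*v) (- D2phi x)) (at x)"
    using has_derivative_minus[OF a[THEN conjunct2, THEN conjunct1, rule_format, of x]]
    by (rule has_derivative_eq_rhs) (simp add: fun_eq_iff mv_neg)
next
  assume a: "(\<forall>x. (phi has_derivative (\<lambda>h. Dphi x \<bullet> h)) (at x)) \<and>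
    (\<forall>x. (Dphi has_derivative (*v) (D2phi x)) (at x)) \<and> continuous_on UNIV D2phi"
  show "continuous_on UNIV (\<lambda>x. - D2phi x)" using a by (intro continuous_on_minus) auto
qed

lemma neg_sub:
  assumes sup: "visc_supersol F c u" and G: "\<And>x p X. G x p X = - F x (-p) (-X)"
  shows "visc_subsol G (-c) (\<lambda>x. - u x)"
  unfolding visc_subsol_def
proof (intro conjI allI impI)
  show "continuous_on UNIV (\<lambda>x. - u x)" using sup by (intro continuous_on_minus) (simp add: visc_supersol_def)
next
  fix phi Dphi D2phi x0
  assume h: "C2_with phi Dphi D2phi \<and> (\<exists>e>0. \<forall>y. dist y x0 < e \<longrightarrow> - u y - phi y \<le> - u x0 - phi x0)"
  then obtain e where e: "e > 0" "\<forall>y. dist y x0 < e \<longrightarrow> - u y - phi y \<le> - u x0 - phi x0" by blast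
  have "C2_with (\<lambda>x. - phi x) (\<lambda>x. - Dphi x) (\<lambda>x. - D2phi x)" using h C2_neg by blast
  moreover have "\<forall>y. dist y x0 < e \<longrightarrow> u y - (- phi y) \<ge> u x0 - (- phi x0)" using e(2) by force
  ultimately have "F x0 (- Dphi x0) (- D2phi x0) \<ge> c" using sup e(1) unfolding visc_supersol_def by blast
  then show "G x0 (Dphi x0) (D2phi x0) \<le> - c" by (simp add: G)
qed

lemma neg_INF: "(INF x\<in>A. f x) = - (SUP x\<in>A. - f x :: real)"
  by (simp add: Inf_real_def image_image)

lemma neg_SUP: "(SUP x\<in>A. f x) = - (INF x\<in>A. - f x :: real)"
  by (simp add: Inf_real_def image_image)

lemma bell_neg_inf:
  "bellman_sup \<sigma> b (\<lambda>x \<alpha>. - l x \<alpha>) x p X = - bellman_inf \<sigma> b l x (-p) (-X)"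
  unfolding bellman_sup_def bellman_inf_def
  by (subst neg_INF) (simp add: trace_mul_neg algebra_simps)

lemma bell_neg_sup:
  "bellman_inf \<sigma> b (\<lambda>x \<alpha>. - l x \<alpha>) x p X = - bellman_sup \<sigma> b l x (-p) (-X)"
  unfolding bellman_sup_def bellman_inf_def
  by (subst neg_SUP) (simp add: trace_mul_neg algebra_simps)



theorem theorem6p5:
  fixes \<sigma> :: "real^'n \<Rightarrow> 'a::metric_space \<Rightarrow> real^'m^'n"
    and b :: "real^'n \<Rightarrow> 'a \<Rightarrow> real^'n"
    and l :: "real^'n \<Rightarrow> 'a \<Rightarrow> real"
    and F :: "real^'n \<Rightarrow> real^'n \<Rightarrow> real^'n^'n \<Rightarrow> real"
    and u :: "real^'n \<Rightarrow> real"
    and c \<rho> R :: real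
  assumes \<sigma>_cont: "continuous_on UNIV (\<lambda>z. \<sigma> (fst z) (snd z))"
    and b_cont: "continuous_on UNIV (\<lambda>z. b (fst z) (snd z))"
    and loc: "\<forall>R'>0. \<exists>K>0.
        (\<forall>x \<alpha>. norm x \<le> R' \<longrightarrow> norm (\<sigma> x \<alpha>) + norm (b x \<alpha>) \<le> K) \<and>
        (\<forall>x y \<alpha>. norm x \<le> R' \<longrightarrow> norm y \<le> R' \<longrightarrow>
            norm (\<sigma> x \<alpha> - \<sigma> y \<alpha>) + norm (b x \<alpha> - b y \<alpha>) \<le> K * norm (x - y)) \<and>
        (\<forall>\<xi> x \<alpha>. norm x \<le> R' \<longrightarrow> \<xi> \<bullet> (diffm \<sigma> x \<alpha> *v \<xi>) \<ge> (norm \<xi>)\<^sup>2 / K)"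
    and l_cont: "continuous_on UNIV (\<lambda>z. l (fst z) (snd z))"
    and l_bdd: "bounded (range (\<lambda>z. l (fst z) (snd z)))"
    and l_uc: "\<forall>\<epsilon>>0. \<exists>\<delta>>0. \<forall>x y \<alpha>. dist x y < \<delta> \<longrightarrow> \<bar>l x \<alpha> - l y \<alpha>\<bar> < \<epsilon>"
    and F_def: "F = bellman_inf \<sigma> b l \<or> F = bellman_sup \<sigma> b l"
    and lyap: "\<forall>M>0. \<exists>R'>0. \<forall>x. norm x \<ge> R' \<longrightarrow>
        (SUP \<alpha>. trace (diffm \<sigma> x \<alpha>) + b x \<alpha> \<bullet> x) \<le> - M"
    and sol: "visc_sol F c u"
    and growth: "((\<lambda>x. u x / (norm x)\<^sup>2) \<longlongrightarrow> 0) at_infinity"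
    and \<rho>_pos: "\<rho> > 0" and R_pos: "R > 0"
    and strong: "\<forall>x. norm x \<ge> R \<longrightarrow>
        (SUP \<alpha>. trace (diffm \<sigma> x \<alpha>) + b x \<alpha> \<bullet> x)
          \<le> - ((2 * \<bar>c\<bar> + sup_norm l) / \<rho>) * norm x powr (2 + \<rho>)"
  shows "(\<forall>x. norm x \<ge> R \<longrightarrow>
           (INF y\<in>cball 0 R. u y) + 1 / norm x powr \<rho> - 1 / R powr \<rho> \<le> u x \<and>
           u x \<le> (SUP y\<in>cball 0 R. u y) - 1 / norm x powr \<rho> + 1 / R powr \<rho>)
         \<and> bounded (range u)"
proof -
  define L where "L = sup_norm l"
  obtain a where a: "\<And>z. \<bar>l (fst z) (snd z)\<bar> \<le> a"
    using l_bdd unfolding bounded_iff by auto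
  have lb: "\<bar>l x \<alpha>\<bar> \<le> L" for x \<alpha>
  proof -
    have "bdd_above (range (\<lambda>z. \<bar>l (fst z) (snd z)\<bar>))" using a by (intro bdd_aboveI2) auto
    then have "\<bar>l (fst (x,\<alpha>)) (snd (x,\<alpha>))\<bar> \<le> (SUP z. \<bar>l (fst z) (snd z)\<bar>)" by (rule cSUP_upper[OF UNIV_I])
    then show ?thesis by (simp add: L_def sup_norm_def)
  qed
  have sub: "visc_subsol F c u" using sol by (simp add: visc_sol_def)
  have sup: "visc_supersol F c u" using sol by (simp add: visc_sol_def)
  have strongL: "\<forall>x. norm x \<ge> R \<longrightarrow>
        (SUP \<alpha>. trace (diffm \<sigma> x \<alpha>) + b x \<alpha> \<bullet> x) \<le> - ((2 * \<bar>c\<bar> + L) / \<rho>) * norm x powr (2 + \<rho>)"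
    using strong by (simp add: L_def)
  have up: "u x \<le> (SUP y\<in>cball 0 R. u y) - 1 / norm x powr \<rho> + 1 / R powr \<rho>" if "norm x \<ge> R" for x
    by (rule upper[OF loc lb F_def sub growth \<rho>_pos R_pos strongL that])
  define l' where "l' = (\<lambda>x \<alpha>. - l x \<alpha>)"
  define G where "G = (if F = bellman_inf \<sigma> b l then bellman_sup \<sigma> b l' else bellman_inf \<sigma> b l')"
  have G: "G x p X = - F x (-p) (-X)" for x p X
    using F_def by (auto simp: G_def l'_def bell_neg_inf bell_neg_sup)
  have Gdef: "G = bellman_inf \<sigma> b l' \<or> G = bellman_sup \<sigma> b l'" by (simp add: G_def)
  have subn: "visc_subsol G (-c) (\<lambda>x. - u x)" by (rule neg_sub[OF sup G])
  have lb': "\<bar>l' x \<alpha>\<bar> \<le> L" for x \<alpha> using lb by (simp add: l'_def)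
  have growth': "((\<lambda>x. - u x / (norm x)\<^sup>2) \<longlongrightarrow> 0) at_infinity"
    using tendsto_minus[OF growth] by simp
  have strong': "\<forall>x. norm x \<ge> R \<longrightarrow>
        (SUP \<alpha>. trace (diffm \<sigma> x \<alpha>) + b x \<alpha> \<bullet> x) \<le> - ((2 * \<bar>-c\<bar> + L) / \<rho>) * norm x powr (2 + \<rho>)"
    using strongL by simp
  have lo: "(INF y\<in>cball 0 R. u y) + 1 / norm x powr \<rho> - 1 / R powr \<rho> \<le> u x" if "norm x \<ge> R" for x
  proof -
    have "- u x \<le> (SUP y\<in>cball 0 R. - u y) - 1 / norm x powr \<rho> + 1 / R powr \<rho>"
      by (rule upper[OF loc lb' Gdef subn growth' \<rho>_pos R_pos strong' that])
    moreover have "(INF y\<in>cball 0 R. u y) = - (SUP y\<in>cball 0 R. - u y)" by (rule neg_INF)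
    ultimately show ?thesis by linarith
  qed
  have ucont: "continuous_on UNIV u" using sub by (simp add: visc_subsol_def)
  have cb: "compact (u ` cball 0 R)"
    by (rule compact_continuous_image) (auto intro: continuous_on_subset[OF ucont])
  have "\<exists>B1. \<forall>y\<in>u ` cball 0 R. norm y \<le> B1" using compact_imp_bounded[OF cb] unfolding bounded_iff .
  then obtain B1 where B1: "\<forall>y\<in>cball 0 R. \<bar>u y\<bar> \<le> B1" by auto
  have ne: "cball (0::real^'n) R \<noteq> {}" using R_pos by simp
  have SUPb: "(SUP y\<in>cball 0 R. u y) \<le> B1"
    by (rule cSUP_least[OF ne]) (use B1 in \<open>force simp: abs_le_iff\<close>)
  have INFb: "(INF y\<in>cball 0 R. u y) \<ge> - B1"
    by (rule cINF_greatest[OF ne]) (use B1 in \<open>force simp: abs_le_iff\<close>)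
  have bnd: "\<bar>u x\<bar> \<le> B1 + 1 / R powr \<rho>" for x
  proof (cases "norm x \<ge> R")
    case True
    have "1 / norm x powr \<rho> \<ge> 0" by simp
    moreover have "1 / R powr \<rho> \<ge> 0" by simp
    ultimately show ?thesis using up[OF True] lo[OF True] SUPb INFb by linarith
  next
    case False
    then have "\<bar>u x\<bar> \<le> B1" using B1[rule_format, of x] by auto
    moreover have "1 / R powr \<rho> \<ge> 0" by simp
    ultimately show ?thesis by linarith
  qed
  have "bounded (range u)" unfolding bounded_iff by (intro exI[of _ "B1 + 1 / R powr \<rho>"]) (auto intro: bnd)
  then show ?thesis using up lo by blast
qed

end
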